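(* Let $\sigma$ be a strongly erasing $k$-block substitution with $w_\epsilon\ne1^k$ that satisfies the optimality condition. Then for every $w\in\{0,1\}^*$ there is $h\in\mathbb N$ such that $f_\sigma^h([w])=\mathbb I$. Consequently $f_\sigma$ is topologically mixing: for all nonempty open sets $A,B\subseteq\mathbb I$ there is $N$ such that $f_\sigma^n(A)\cap B\ne\emptyset$ for all $n\ge N$.
   Context: Notation: $\mathbb I=[0,1]$. $\{0,1\}^*$ and $\{0,1\}^\omega$ denote finite and infinite binary words, and $\epsilon$ is the empty word. For a word $w$, set $0.w=\sum_iw_i2^{-i}$. For $x\in(0,1]$, $\widetilde x$ is the unique infinite binary expansion of $x$ not ending in $0^\infty$. For $w\in\{0,1\}^*$, the cylinder is $[w]=\{x\in\mathbb I:x=0.wv\text{ for some finite or infinite word }v\}$. Fix $k\ge2$. An erasing $k$-block substitution is a map $\sigma:\{0,1\}^k\to\{0,1\}^*$ with exactly one block $w_\epsilon$ such that $\sigma(w_\epsilon)=\epsilon$. It acts blockwise on infinite words and on finite words of length a multiple of $k$. $k$-rounding: a $k$-rounding of $w$ is any word $wv$ whose length is the least multiple of $k$ that is $\ge|w|$; if $|w|$ is a multiple of $k$, the only $k$-rounding of $w$ is $w$. $\sigma$ is strongly erasing if for every $w\in\{0,1\}^*$ there exist $n\in\mathbb N$ and words $r_0,\dots,r_{n-1}$ such that $r_0$ is a $k$-rounding of $w$, $r_j$ is a $k$-rounding of $\sigma(r_{j-1})$ for $1\le j\le n-1$, and $\sigma(r_{n-1})=\epsilon$. The map $f_\sigma:\mathbb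 I\to\mathbb I$ is defined by $f_\sigma(x)=0.\sigma(\widetilde x)$ if $x\in(0,1]$ and $\widetilde x\neq w_\epsilon^\infty$, and $f_\sigma(x)=0$ otherwise. Optimality condition: every $w\in\{0,1\}^\omega$ can be written as $w=\prod_{i\ge1}\sigma(b_i)$ with blocks $b_i\in\{0,1\}^k$ satisfying $\sigma(b_i)\ne\epsilon$. *)

theory Defs
  imports "HOL-Analysis.Analysis"
begin

text \<open>Finite binary words are bool lists (True = 1), infinite binary words are
  functions nat \<Rightarrow> bool (position 0 is the first letter). Block substitutions are
  maps on bool lists; only their values on lists of length k matter.\<close>

definition bit :: "bool \<Rightarrow> real" where
  "bit b = (if b then 1 else 0)"

definition val_fin :: "bool list \<Rightarrow> real" where
  "val_fin w = (\<Sum>i<length w. bit (w ! i) / 2 ^ (i + 1))"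

definition val_inf :: "(nat \<Rightarrow> bool) \<Rightarrow> real" where
  "val_inf s = (\<Sum>i. bit (s i) / 2 ^ (i + 1))"

definition app_inf :: "bool list \<Rightarrow> (nat \<Rightarrow> bool) \<Rightarrow> (nat \<Rightarrow> bool)" where
  "app_inf w v = (\<lambda>n. if n < length w then w ! n else v (n - length w))"

definition tilde :: "real \<Rightarrow> (nat \<Rightarrow> bool)" where
  "tilde x = (THE s. (\<forall>n. \<exists>m\<ge>n. s m) \<and> val_inf s = x)"

definition cyl :: "bool list \<Rightarrow> real set" where
  "cyl w = {val_fin (w @ v) | v. True} \<union> {val_inf (app_inf w v) | v. True}"

definition block :: "nat \<Rightarrow> (nat \<Rightarrow> bool) \<Rightarrow> nat \<Rightarrow> bool list" where
  "block k s i = map s [i * k..<(i + 1) * k]"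

definition chunks :: "nat \<Rightarrow> bool list \<Rightarrow> bool list list" where
  "chunks k w = map (\<lambda>i. take k (drop (i * k) w)) [0..<length w div k]"

definition subst_fin :: "nat \<Rightarrow> (bool list \<Rightarrow> bool list) \<Rightarrow> bool list \<Rightarrow> bool list" where
  "subst_fin k \<sigma> w = concat (map \<sigma> (chunks k w))"

definition erasing_subst :: "nat \<Rightarrow> (bool list \<Rightarrow> bool list) \<Rightarrow> bool" where
  "erasing_subst k \<sigma> \<longleftrightarrow> (\<exists>!b. length b = k \<and> \<sigma> b = [])"

definition w_eps :: "nat \<Rightarrow> (bool list \<Rightarrow> bool list) \<Rightarrow> bool list" where
  "w_eps k \<sigma> = (THE b. length b = k \<and> \<sigma> b = [])"

definition is_rounding :: "nat \<Rightarrow> bool list \<Rightarrow> bool list \<Rightarrow> bool" where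
  "is_rounding k w r \<longleftrightarrow> (\<exists>v. r = w @ v) \<and> length r mod k = 0 \<and>
     (\<forall>m. m mod k = 0 \<and> length w \<le> m \<longrightarrow> length r \<le> m)"

definition strongly_erasing :: "nat \<Rightarrow> (bool list \<Rightarrow> bool list) \<Rightarrow> bool" where
  "strongly_erasing k \<sigma> \<longleftrightarrow> (\<forall>w. \<exists>n \<ge> 1. \<exists>r :: nat \<Rightarrow> bool list.
      is_rounding k w (r 0) \<and>
      (\<forall>j. 1 \<le> j \<and> j \<le> n - 1 \<longrightarrow> is_rounding k (subst_fin k \<sigma> (r (j - 1))) (r j)) \<and>
      subst_fin k \<sigma> (r (n - 1)) = [])"

text \<open>0.(ws 0 ws 1 ws 2 ...) for the (finite or infinite) concatenation of finite words\<close>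
definition val_concat :: "(nat \<Rightarrow> bool list) \<Rightarrow> real" where
  "val_concat ws = (\<Sum>i. val_fin (ws i) / 2 ^ (\<Sum>j<i. length (ws j)))"

definition f_sigma :: "nat \<Rightarrow> (bool list \<Rightarrow> bool list) \<Rightarrow> real \<Rightarrow> real" where
  "f_sigma k \<sigma> x = (if 0 < x \<and> x \<le> 1 \<and> \<not> (\<forall>i. block k (tilde x) i = w_eps k \<sigma>)
      then val_concat (\<lambda>i. \<sigma> (block k (tilde x) i)) else 0)"

definition optimal :: "nat \<Rightarrow> (bool list \<Rightarrow> bool list) \<Rightarrow> bool" where
  "optimal k \<sigma> \<longleftrightarrow> (\<forall>s :: nat \<Rightarrow> bool. \<exists>b :: nat \<Rightarrow> bool list.
      (\<forall>i. length (b i) = k \<and> \<sigma> (b i) \<noteq> []) \<and>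
      (\<forall>n. map s [0..<(\<Sum>j<n. length (\<sigma> (b j)))] = concat (map (\<sigma> \<circ> b) [0..<n])))"

end

theory Submission
  imports Defs
begin



lemma bit_01: "0 \<le> bit b" "bit b \<le> 1"
  by (auto simp: bit_def)

lemma term_summable: "summable (\<lambda>i. bit (s i) / 2 ^ (i + 1) :: real)"
proof (rule summable_comparison_test[where g="\<lambda>i. (1/2::real)^Suc i"])
  show "summable (\<lambda>i. (1/2::real)^Suc i)" using power_half_series summable_def by blast
  show "\<exists>N. \<forall>n\<ge>N. norm (bit (s n) / 2 ^ (n + 1)) \<le> (1 / 2) ^ Suc n"
    by (auto simp: bit_def power_divide)
qed

lemma val_inf_sums: "(\<lambda>i. bit (s i) / 2 ^ (i + 1)) sums val_inf s"
  unfolding val_inf_def using term_summable summable_sums by blast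

lemma val_inf_nonneg: "0 \<le> val_inf s"
  unfolding val_inf_def by (rule suminf_nonneg[OF term_summable]) (simp add: bit_def)

lemma val_inf_le1: "val_inf s \<le> 1"
proof -
  have "val_inf s \<le> (\<Sum>i. (1/2::real)^Suc i)"
    unfolding val_inf_def
    apply (rule suminf_le)
    using power_half_series summable_def term_summable by (auto simp: bit_def power_divide)
  also have "\<dots> = 1" using power_half_series sums_unique by metis
  finally show ?thesis .
qed

lemma val_inf_pos: assumes "s m" shows "0 < val_inf s"
proof -
  have "(\<Sum>i\<in>{m}. bit (s i) / 2 ^ (i + 1)) \<le> val_inf s"
    unfolding val_inf_def
    by (rule sum_le_suminf[OF term_summable]) (auto simp: bit_def)
  moreover have "0 < (\<Sum>i\<in>{m}. bit (s i) / 2 ^ (i + 1) :: real)" using assms by (simp add: bit_def)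
  ultimately show ?thesis by linarith
qed

lemma val_inf_app: "val_inf (app_inf w v) = val_fin w + val_inf v / 2 ^ length w"
proof -
  let ?f = "\<lambda>i. bit (app_inf w v i) / 2 ^ (i + 1) :: real"
  have "val_inf (app_inf w v) = (\<Sum>i. ?f (i + length w)) + (\<Sum>i<length w. ?f i)"
    unfolding val_inf_def by (rule suminf_split_initial_segment[OF term_summable])
  moreover have "(\<Sum>i<length w. ?f i) = val_fin w"
    unfolding val_fin_def app_inf_def by (rule sum.cong) auto
  moreover have "(\<Sum>i. ?f (i + length w)) = (\<Sum>i. bit (v i) / 2 ^ (i + 1) / 2 ^ length w)"
    by (rule arg_cong[where f=suminf]) (auto simp: app_inf_def power_add)
  moreover have "\<dots> = val_inf v / 2 ^ length w"
    unfolding val_inf_def by (rule suminf_divide[OF term_summable])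
  ultimately show ?thesis by simp
qed

lemma val_inf_false: "val_inf (\<lambda>_. False) = 0"
  unfolding val_inf_def by (simp add: bit_def)

lemma val_fin_as_inf: "val_fin w = val_inf (app_inf w (\<lambda>_. False))"
  by (simp add: val_inf_app val_inf_false)

lemma val_fin_01: "0 \<le> val_fin w" "val_fin w \<le> 1"
proof -
  have "val_inf (app_inf w (\<lambda>_. False)) \<ge> 0" "val_inf (app_inf w (\<lambda>_. False)) \<le> 1"
    using val_inf_nonneg val_inf_le1 by auto
  then show "0 \<le> val_fin w" "val_fin w \<le> 1" using val_fin_as_inf by auto
qed

lemma app_inf_assoc: "app_inf (u @ v) t = app_inf u (app_inf v t)"
  by (auto simp: app_inf_def nth_append)

lemma val_fin_append: "val_fin (a @ b) = val_fin a + val_fin b / 2 ^ length a"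
proof -
  have "val_fin (a @ b) = val_inf (app_inf a (app_inf b (\<lambda>_. False)))"
    using val_fin_as_inf app_inf_assoc by metis
  also have "\<dots> = val_fin a + val_fin b / 2 ^ length a"
    using val_inf_app[of a "app_inf b (\<lambda>_. False)"] val_fin_as_inf[of b] by simp
  finally show ?thesis .
qed

definition C :: "bool list \<Rightarrow> real set" where
  "C u = range (\<lambda>t. val_inf (app_inf u t))"

lemma cyl_eq: "cyl w = C w"
proof
  show "cyl w \<subseteq> C w"
  proof
    fix x assume "x \<in> cyl w"
    then consider v where "x = val_fin (w @ v)" | v where "x = val_inf (app_inf w v)"
      unfolding cyl_def by blast
    then show "x \<in> C w"
    proof cases
      case (1 v) then show ?thesis unfolding C_def
        by (metis app_inf_assoc rangeI val_fin_as_inf)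
    next
      case (2 v) then show ?thesis unfolding C_def by blast
    qed
  qed
  show "C w \<subseteq> cyl w" unfolding C_def cyl_def by blast
qed

lemma C_mono: "C (u @ v) \<subseteq> C u"
  unfolding C_def by (auto simp: app_inf_assoc)

lemma C_sub: "C u \<subseteq> {0..1}"
  unfolding C_def using val_inf_nonneg val_inf_le1 by auto




lemma shift_split: "s = app_inf (map s [0..<p]) (\<lambda>m. s (m + p))"
  by (auto simp: app_inf_def)

lemma val_inf_split: "val_inf s = val_fin (map s [0..<p]) + val_inf (\<lambda>m. s (m + p)) / 2 ^ p"
  using val_inf_app[of "map s [0..<p]" "\<lambda>m. s (m + p)"] shift_split[of s p] by simp

lemma val_inf_head: "val_inf s = bit (s 0) / 2 + val_inf (\<lambda>m. s (Suc m)) / 2"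
  using val_inf_split[of s 1] by (simp add: val_fin_def)

lemma uniq_aux:
  assumes inf: "\<forall>n. \<exists>m\<ge>n. s m" and eq: "val_inf s = val_inf s'"
    and pre: "map s [0..<p] = map s' [0..<p]" and sp: "s p" and sp': "\<not> s' p"
  shows False
proof -
  have e1: "val_inf (\<lambda>m. s (m + p)) = val_inf (\<lambda>m. s' (m + p))"
    using val_inf_split[of s p] val_inf_split[of s' p] eq pre by simp
  obtain m where m: "m \<ge> Suc p" "s m" using inf by blast
  have pos: "0 < val_inf (\<lambda>i. s (Suc i + p))"
    by (rule val_inf_pos[of _ "m - Suc p"]) (use m in auto)
  have "val_inf (\<lambda>m. s (m + p)) = 1/2 + val_inf (\<lambda>i. s (Suc i + p)) / 2"
    using val_inf_head[of "\<lambda>m. s (m + p)"] sp by (simp add: bit_def)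
  moreover have "val_inf (\<lambda>m. s' (m + p)) = val_inf (\<lambda>i. s' (Suc i + p)) / 2"
    using val_inf_head[of "\<lambda>m. s' (m + p)"] sp' by (simp add: bit_def)
  moreover have "val_inf (\<lambda>i. s' (Suc i + p)) \<le> 1" by (rule val_inf_le1)
  ultimately show False using e1 pos by linarith
qed

lemma val_inf_inj:
  assumes "\<forall>n. \<exists>m\<ge>n. s m" "\<forall>n. \<exists>m\<ge>n. s' m" "val_inf s = val_inf s'"
  shows "s = s'"
proof (rule ccontr)
  assume "s \<noteq> s'"
  then have ex: "\<exists>p. s p \<noteq> s' p" by auto
  define p where "p = (LEAST p. s p \<noteq> s' p)"
  have d: "s p \<noteq> s' p" unfolding p_def by (rule LeastI_ex[OF ex])
  have pre: "map s [0..<p] = map s' [0..<p]"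
  proof (rule map_cong[OF refl])
    fix i assume "i \<in> set [0..<p]"
    then have "i < p" by simp
    then show "s i = s' i" using not_less_Least[of i "\<lambda>p. s p \<noteq> s' p"] p_def by blast
  qed
  show False
  proof (cases "s p")
    case True
    then have "\<not> s' p" using d by simp
    then show ?thesis using uniq_aux[OF assms(1) assms(3) pre True] by simp
  next
    case False
    then have "s' p" using d by simp
    then show ?thesis using uniq_aux[OF assms(2) assms(3)[symmetric] pre[symmetric] _ False] by simp
  qed
qed

lemma tilde_eq:
  assumes "\<forall>n. \<exists>m\<ge>n. s m" shows "tilde (val_inf s) = s"
  unfolding tilde_def
proof (rule the_equality)
  show "(\<forall>n. \<exists>m\<ge>n. s m) \<and> val_inf s = val_inf s" using assms by simp
  fix s' assume "(\<forall>n. \<exists>m\<ge>n. s' m) \<and> val_inf s' = val_inf s"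
  then show "s' = s" using val_inf_inj[OF _ assms] by blast
qed

lemma val_inf_pos': assumes "\<forall>n. \<exists>m\<ge>n. s m" shows "0 < val_inf s"
  using assms val_inf_pos by blast

lemma val_fin_map: "val_fin (map s [0..<n]) = (\<Sum>i<n. bit (s i) / 2 ^ (i + 1))"
  unfolding val_fin_def by simp

lemma length_concat_map: "length (concat (map ws [0..<n])) = (\<Sum>j<n. length (ws j))"
  by (induction n) auto

lemma val_concat_partial:
  "(\<Sum>i<n. val_fin (ws i) / 2 ^ (\<Sum>j<i. length (ws j))) = val_fin (concat (map ws [0..<n]))"
proof (induction n)
  case 0 then show ?case by (simp add: val_fin_def)
next
  case (Suc n)
  then show ?case by (simp add: val_fin_append length_concat_map)
qed

lemma val_concat_01: "0 \<le> val_concat ws" "val_concat ws \<le> 1"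
proof -
  let ?a = "\<lambda>i. val_fin (ws i) / 2 ^ (\<Sum>j<i. length (ws j))"
  have nn: "\<And>i. 0 \<le> ?a i" using val_fin_01 by simp
  have sm: "summable ?a"
  proof (rule bounded_imp_summable[where B=1])
    fix n
    have "(\<Sum>k\<le>n. ?a k) = (\<Sum>k<Suc n. ?a k)" using lessThan_Suc_atMost by metis
    also have "\<dots> \<le> 1" unfolding val_concat_partial using val_fin_01 by simp
    finally show "(\<Sum>k\<le>n. ?a k) \<le> 1" .
  qed (use nn in auto)
  show "0 \<le> val_concat ws" unfolding val_concat_def using suminf_nonneg[OF sm nn] .
  show "val_concat ws \<le> 1" unfolding val_concat_def
    by (rule suminf_le_const[OF sm]) (simp add: val_concat_partial val_fin_01)
qed

definition isp :: "bool list \<Rightarrow> (nat \<Rightarrow> bool) \<Rightarrow> bool" where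
  "isp P s \<longleftrightarrow> P = map s [0..<length P]"

lemma val_concat_eq:
  assumes pre: "\<And>n. isp (concat (map ws [0..<n])) s"
    and unb: "\<And>m. \<exists>n. m \<le> length (concat (map ws [0..<n]))"
  shows "val_concat ws = val_inf s"
proof -
  let ?a = "\<lambda>i. val_fin (ws i) / 2 ^ (\<Sum>j<i. length (ws j))"
  let ?L = "\<lambda>n. length (concat (map ws [0..<n]))"
  let ?g = "\<lambda>m. (\<Sum>i<m. bit (s i) / 2 ^ (i + 1))"
  have g: "?g \<longlonglongrightarrow> val_inf s" using val_inf_sums sums_def by blast
  have monoL: "mono ?L" unfolding mono_def
  proof (intro allI impI)
    fix x y :: nat assume "x \<le> y"
    then obtain d where "y = x + d" using le_Suc_ex by blast
    then have "[0..<y] = [0..<x] @ [x..<y]" using upt_add_eq_append[of 0 x d] by simp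
    then show "?L x \<le> ?L y" by simp
  qed
  have L: "filterlim ?L at_top sequentially"
    unfolding filterlim_at_top
  proof
    fix Z obtain n where "Z \<le> ?L n" using unb by blast
    then show "eventually (\<lambda>x. Z \<le> ?L x) sequentially"
      unfolding eventually_sequentially using monoL by (meson le_trans monoD)
  qed
  have "(?g \<circ> ?L) \<longlonglongrightarrow> val_inf s" using filterlim_compose[OF g L] by (simp add: comp_def)
  moreover have "(?g \<circ> ?L) = (\<lambda>n. \<Sum>i<n. ?a i)"
  proof
    fix n
    have "(\<Sum>i<n. ?a i) = val_fin (concat (map ws [0..<n]))" by (rule val_concat_partial)
    also have "\<dots> = val_fin (map s [0..<?L n])" using pre[of n] unfolding isp_def by metis
    finally show "(?g \<circ> ?L) n = (\<Sum>i<n. ?a i)" by (simp add: val_fin_map)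
  qed
  ultimately have "?a sums val_inf s" unfolding sums_def by simp
  then show ?thesis unfolding val_concat_def using sums_unique by metis
qed




lemma ceil_double: "2 * \<lceil>a\<rceil> - 1 \<le> \<lceil>2 * a :: real\<rceil>" "\<lceil>2 * a :: real\<rceil> \<le> 2 * \<lceil>a\<rceil>"
proof -
  have "a \<le> of_int \<lceil>a\<rceil>" by simp
  then have "2 * a \<le> of_int (2 * \<lceil>a\<rceil>)" by simp
  then show "\<lceil>2 * a :: real\<rceil> \<le> 2 * \<lceil>a\<rceil>" by (simp add: ceiling_le_iff)
  have "of_int \<lceil>a\<rceil> - 1 < a" by linarith
  then have "of_int (2 * \<lceil>a\<rceil> - 2) < 2 * a" by simp
  then have "2 * \<lceil>a\<rceil> - 2 < \<lceil>2 * a\<rceil>" by linarith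
  then show "2 * \<lceil>a\<rceil> - 1 \<le> \<lceil>2 * a :: real\<rceil>" by simp
qed

lemma aux1: "(p::real) > 0 \<Longrightarrow> a/p + (b - 2*a)/(2*p) = b/(2*p)"
  by (simp add: field_simps)

lemma aux2: "(p::real) > 0 \<Longrightarrow> (y*p - 1)/p = y - 1/p"
  by (simp add: field_simps)

lemma expansion_pos:
  assumes "0 < y" "y \<le> (1::real)" shows "\<exists>t. val_inf t = y"
proof -
  define c where "c n = \<lceil>y * 2 ^ n\<rceil> - 1" for n
  define t where "t n = (c (Suc n) \<noteq> 2 * c n)" for n
  have step: "c (Suc n) = 2 * c n \<or> c (Suc n) = 2 * c n + 1" for n
  proof -
    have e: "\<lceil>y * 2 ^ Suc n\<rceil> = \<lceil>2 * (y * 2 ^ n)\<rceil>" by (simp add: algebra_simps)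
    show ?thesis unfolding c_def using ceil_double[of "y * 2 ^ n"] e by arith
  qed
  have bt: "bit (t n) = real_of_int (c (Suc n) - 2 * c n)" for n
  proof (cases "c (Suc n) = 2 * c n")
    case True then show ?thesis unfolding t_def bit_def by simp
  next
    case False
    then have "c (Suc n) - 2 * c n = 1" using step[of n] by simp
    then show ?thesis using False unfolding t_def bit_def by simp
  qed
  have "\<lceil>y\<rceil> = 1" by (rule ceiling_unique) (use assms in auto)
  then have c0: "c 0 = 0" unfolding c_def by simp
  have part: "(\<Sum>i<n. bit (t i) / 2 ^ (i + 1)) = c n / 2 ^ n" for n
  proof (induction n)
    case 0 then show ?case by (simp add: c0)
  next
    case (Suc n)
    have "(\<Sum>i<Suc n. bit (t i) / 2 ^ (i + 1)) = c n / 2 ^ n + (c (Suc n) - 2 * c n) / 2 ^ (n + 1)"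
    proof -
      have "(\<Sum>i<Suc n. bit (t i) / 2 ^ (i + 1)) = (\<Sum>i<n. bit (t i) / 2 ^ (i + 1)) + bit (t n) / 2 ^ (n + 1)"
        by (rule sum.lessThan_Suc)
      then show ?thesis unfolding Suc.IH bt[of n] by simp
    qed
    also have "\<dots> = c (Suc n) / 2 ^ Suc n"
      using aux1[of "2^n" "c n" "c (Suc n)"] by simp
    finally show ?case .
  qed
  have lo: "y - (1/2)^n \<le> c n / 2 ^ n" for n
  proof -
    have "y * 2 ^ n \<le> of_int \<lceil>y * 2 ^ n\<rceil>" by simp
    then have "y * 2^n - 1 \<le> c n" unfolding c_def by simp
    then have "(y * 2^n - 1) / 2^n \<le> c n / 2^n" by (simp add: divide_right_mono)
    moreover have "(y * 2^n - 1) / 2^n = y - 1 / 2^n" using aux2[of "2^n" y] by simp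
    moreover have "(1/2::real)^n = 1 / 2^n" by (simp add: power_divide)
    ultimately show ?thesis by simp
  qed
  have hi: "c n / 2 ^ n \<le> y" for n
  proof -
    have "of_int \<lceil>y * 2 ^ n\<rceil> - 1 < y * 2 ^ n" by linarith
    then have "c n \<le> y * 2^n" unfolding c_def by simp
    then show ?thesis by (simp add: pos_divide_le_eq)
  qed
  have z: "(\<lambda>n. (1/2::real)^n) \<longlonglongrightarrow> 0" by (rule LIMSEQ_realpow_zero) auto
  have lim1: "(\<lambda>n. y - (1/2::real)^n) \<longlonglongrightarrow> y - 0" by (intro tendsto_intros z)
  have "(\<lambda>n. c n / 2 ^ n :: real) \<longlonglongrightarrow> y"
  proof (rule real_tendsto_sandwich[of "\<lambda>n. y - (1/2)^n" _ _ "\<lambda>n. y"])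
    show "\<forall>\<^sub>F n in sequentially. y - (1 / 2) ^ n \<le> real_of_int (c n) / 2 ^ n"
      using lo by (intro always_eventually) blast
    show "\<forall>\<^sub>F n in sequentially. real_of_int (c n) / 2 ^ n \<le> y"
      using hi by (intro always_eventually) blast
  qed (use lim1 in simp_all)
  then have "(\<lambda>i. bit (t i) / 2 ^ (i + 1)) sums y" unfolding sums_def part .
  then show ?thesis using val_inf_sums sums_unique2 by blast
qed

lemma expansion: assumes "y \<in> {0..1::real}" shows "\<exists>t. val_inf t = y"
proof (cases "y = 0")
  case True then show ?thesis using val_inf_false by blast
next
  case False then show ?thesis using assms expansion_pos by auto
qed

lemma C_nil: "C [] = {0..1}"
proof
  show "C [] \<subseteq> {0..1}" by (rule C_sub)
  show "{0..1} \<subseteq> C []"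
  proof
    fix y :: real assume "y \<in> {0..1}"
    then obtain t where "val_inf t = y" using expansion by blast
    moreover have "app_inf [] t = t" by (simp add: app_inf_def)
    ultimately show "y \<in> C []" unfolding C_def by (metis rangeI)
  qed
qed




lemma isp_iff: "isp P s \<longleftrightarrow> (\<forall>j<length P. P ! j = s j)"
proof
  assume "isp P s"
  then have e: "P = map s [0..<length P]" unfolding isp_def .
  show "\<forall>j<length P. P ! j = s j"
  proof (intro allI impI)
    fix j assume j: "j < length P"
    have "map s [0..<length P] ! j = s j" using j by simp
    then show "P ! j = s j" using e by metis
  qed
next
  assume a: "\<forall>j<length P. P ! j = s j"
  show "isp P s" unfolding isp_def
    by (rule nth_equalityI) (use a in auto)
qed

lemma isp_prefix: "isp P (app_inf (P @ v) t)"
  unfolding isp_iff app_inf_def by (simp add: nth_append)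

lemma isp_app: assumes "isp P t" shows "isp (u @ P) (app_inf u t)"
  unfolding isp_iff app_inf_def
proof (intro allI impI)
  fix j assume "j < length (u @ P)"
  then show "(u @ P) ! j = (if j < length u then u ! j else t (j - length u))"
    using assms unfolding isp_iff by (auto simp: nth_append)
qed




lemma concat_interleave:
  assumes "\<And>i. e (2 * i) = g i" "\<And>i. e (2 * i + 1) = []"
  shows "concat (map e [0..<m]) = concat (map g [0..<(m + 1) div 2])"
proof (induction m)
  case 0 then show ?case by simp
next
  case (Suc m)
  show ?case
  proof (cases "even m")
    case True
    then obtain i where i: "m = 2 * i" by blast
    have "(Suc m + 1) div 2 = Suc i" "(m + 1) div 2 = i" using i by auto
    have "concat (map e [0..<Suc m]) = concat (map e [0..<m]) @ e m" by simp
    also have "\<dots> = concat (map g [0..<i]) @ g i" using Suc.IH i assms(1)[of i] by simp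
    also have "\<dots> = concat (map g [0..<Suc i])" by simp
    finally show ?thesis using i by simp
  next
    case False
    then obtain i where i: "m = 2 * i + 1" using oddE by blast
    have "(Suc m + 1) div 2 = Suc i" "(m + 1) div 2 = Suc i" using i by auto
    have "concat (map e [0..<Suc m]) = concat (map e [0..<m]) @ e m" by simp
    also have "\<dots> = concat (map g [0..<Suc i])" using Suc.IH i assms(2)[of i] by simp
    finally show ?thesis using i by simp
  qed
qed

lemma zblk_aux: "p < (k::nat) \<Longrightarrow> (i * k + p) div k = i \<and> (i * k + p) mod k = p"
proof -
  assume p: "p < k"
  then have k: "k \<noteq> 0" by simp
  have "(p + i * k) div k = i + p div k" using div_mult_self1[OF k] by simp
  moreover have "(p + i * k) mod k = p mod k" using mod_mult_self1 by simp
  ultimately show ?thesis using p by (simp add: add.commute)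
qed

lemma main_step:
  fixes k q :: nat and \<sigma> :: "bool list \<Rightarrow> bool list" and r we :: "bool list"
    and b :: "nat \<Rightarrow> bool list" and t :: "nat \<Rightarrow> bool"
  assumes k: "0 < k" and we: "length we = k" "\<sigma> we = []" "w_eps k \<sigma> = we"
    and r: "length r = q * k"
    and bl: "\<And>i. length (b i) = k" and bne: "\<And>i. \<sigma> (b i) \<noteq> []"
    and bt: "\<And>n. map t [0..<(\<Sum>j<n. length (\<sigma> (b j)))] = concat (map (\<sigma> \<circ> b) [0..<n])"
  shows "val_inf (app_inf (subst_fin k \<sigma> r) t) \<in> f_sigma k \<sigma> ` C r"
proof -
  define d where "d i = (if i < q then take k (drop (i*k) r)
      else if even (i - q) then b ((i - q) div 2) else we)" for i
  define z where "z n = d (n div k) ! (n mod k)" for n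
  have lend: "length (d i) = k" for i
  proof (cases "i < q")
    case True
    then have "Suc i * k \<le> q * k" by (intro mult_le_mono1) simp
    then have "k \<le> length r - i * k" using r by simp
    then show ?thesis using True unfolding d_def by simp
  next
    case False then show ?thesis unfolding d_def using bl we by simp
  qed
  have zblk: "p < k \<Longrightarrow> z (i * k + p) = d i ! p" for i p
    unfolding z_def using zblk_aux[of p k i] by simp
  have blk: "block k z i = d i" for i
    unfolding block_def
  proof (rule nth_equalityI)
    show "length (map z [i * k..<(i + 1) * k]) = length (d i)" using lend by simp
    fix j assume "j < length (map z [i * k..<(i + 1) * k])"
    then have j: "j < k" by simp
    have "map z [i * k..<(i + 1) * k] ! j = z (i * k + j)" using j by simp
    then show "map z [i * k..<(i + 1) * k] ! j = d i ! j" using zblk[OF j] by simp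
  qed
  have zr: "app_inf r (\<lambda>n. z (n + q*k)) = z"
  proof
    fix n
    show "app_inf r (\<lambda>n. z (n + q*k)) n = z n"
    proof (cases "n < q * k")
      case True
      define i where "i = n div k"
      define j where "j = n mod k"
      have n: "n = i * k + j" unfolding i_def j_def by simp
      have j: "j < k" unfolding j_def using k by simp
      have i: "i < q" unfolding i_def using True by (simp add: less_mult_imp_div_less)
      have "i * k \<le> length r" using i r by simp
      have "z n = d i ! j" using zblk[OF j] n by simp
      also have "\<dots> = take k (drop (i*k) r) ! j" unfolding d_def using i by simp
      also have "\<dots> = r ! n" using j n \<open>i * k \<le> length r\<close> by simp
      finally show ?thesis unfolding app_inf_def using True r by simp
    next
      case False then show ?thesis unfolding app_inf_def using r by simp
    qed
  qed
  define x where "x = val_inf z"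
  have xC: "x \<in> C r" unfolding C_def x_def using zr by (metis rangeI)
  have dq: "d (q + 2 * N) = b N" "d (q + 2 * N + 1) = we" for N
    unfolding d_def by auto
  have inf: "\<forall>N. \<exists>m\<ge>N. z m"
  proof
    fix N
    show "\<exists>m\<ge>N. z m"
    proof (cases "\<exists>p<k. we ! p")
      case True
      then obtain p where p: "p < k" "we ! p" by blast
      have "z ((q + 2 * N + 1) * k + p) = d (q + 2 * N + 1) ! p" by (rule zblk[OF p(1)])
      then have "z ((q + 2 * N + 1) * k + p) = we ! p" by (simp only: dq(2))
      moreover have "N \<le> (q + 2 * N + 1) * k + p"
      proof -
        have "q + 2 * N + 1 \<le> (q + 2 * N + 1) * k" using k by (metis Suc_leI mult_le_mono2 mult.right_neutral One_nat_def)
        then show ?thesis by simp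
      qed
      ultimately show ?thesis using p by blast
    next
      case False
      have "\<exists>p<k. b N ! p"
      proof (rule ccontr)
        assume "\<not> (\<exists>p<k. b N ! p)"
        then have "b N = we" using False bl we by (intro nth_equalityI) auto
        then show False using bne[of N] we(2) by simp
      qed
      then obtain p where p: "p < k" "b N ! p" by blast
      have "z ((q + 2 * N) * k + p) = d (q + 2 * N) ! p" by (rule zblk[OF p(1)])
      then have "z ((q + 2 * N) * k + p) = b N ! p" by (simp only: dq(1))
      moreover have "N \<le> (q + 2 * N) * k + p"
      proof -
        have "q + 2 * N \<le> (q + 2 * N) * k" using k by (metis Suc_leI mult_le_mono2 mult.right_neutral One_nat_def)
        then show ?thesis by linarith
      qed
      ultimately show ?thesis using p by blast
    qed
  qed
  have tz: "tilde x = z" unfolding x_def by (rule tilde_eq[OF inf])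
  have x01: "0 < x" "x \<le> 1" unfolding x_def using val_inf_pos'[OF inf] val_inf_le1 by auto
  have nall: "\<not> (\<forall>i. block k (tilde x) i = w_eps k \<sigma>)"
  proof
    assume "\<forall>i. block k (tilde x) i = w_eps k \<sigma>"
    then have "d q = we" using tz blk we(3) by metis
    moreover have "d q = b 0" unfolding d_def by simp
    ultimately show False using bne we by metis
  qed
  have fx: "f_sigma k \<sigma> x = val_concat (\<lambda>i. \<sigma> (d i))"
    unfolding f_sigma_def using x01 nall tz blk by simp
  define u where "u = subst_fin k \<sigma> r"
  have chunks: "chunks k r = map d [0..<q]"
    unfolding chunks_def using r k by (auto simp: d_def)
  have u: "u = concat (map (\<lambda>i. \<sigma> (d i)) [0..<q])"
    unfolding u_def subst_fin_def chunks by (simp add: comp_def)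
  define e where "e i = \<sigma> (d (i + q))" for i
  have e1: "e (2 * i) = (\<sigma> \<circ> b) i" for i unfolding e_def d_def by simp
  have e2: "e (2 * i + 1) = []" for i unfolding e_def d_def using we by simp
  have cat: "concat (map (\<lambda>i. \<sigma> (d i)) [0..<n]) = u @ concat (map (\<sigma> \<circ> b) [0..<(n - q + 1) div 2])"
    if "q \<le> n" for n
  proof -
    obtain m where m: "n = q + m" using \<open>q \<le> n\<close> le_Suc_ex by blast
    have "[0..<n] = [0..<q] @ [q..<q + m]" using m upt_add_eq_append[of 0 q m] by simp
    moreover have "[q..<q + m] = map (\<lambda>i. i + q) [0..<m]" using map_add_upt[of q m] by (simp add: add.commute)
    ultimately have "map (\<lambda>i. \<sigma> (d i)) [0..<n] = map (\<lambda>i. \<sigma> (d i)) [0..<q] @ map e [0..<m]"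
      by (simp add: e_def)
    then have "concat (map (\<lambda>i. \<sigma> (d i)) [0..<n]) = u @ concat (map e [0..<m])" using u by simp
    also have "concat (map e [0..<m]) = concat (map (\<sigma> \<circ> b) [0..<(m + 1) div 2])"
      by (rule concat_interleave[OF e1 e2])
    finally show ?thesis using m by simp
  qed
  have ispb: "isp (concat (map (\<sigma> \<circ> b) [0..<p])) t" for p
  proof -
    have "length (concat (map (\<sigma> \<circ> b) [0..<p])) = (\<Sum>j<p. length (\<sigma> (b j)))"
      using length_concat_map[of "\<sigma> \<circ> b" p] by simp
    then show ?thesis unfolding isp_def using bt[of p] by simp
  qed
  have pre: "isp (concat (map (\<lambda>i. \<sigma> (d i)) [0..<n])) (app_inf u t)" for n
  proof (cases "q \<le> n")
    case True
    then show ?thesis using cat isp_app ispb by metis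
  next
    case False
    then obtain m where m: "q = n + m" using le_Suc_ex[of n q] by auto
    have "[0..<q] = [0..<n] @ [n..<n + m]" using m upt_add_eq_append[of 0 n m] by simp
    then have "u = concat (map (\<lambda>i. \<sigma> (d i)) [0..<n]) @ concat (map (\<lambda>i. \<sigma> (d i)) [n..<n+m])"
      using u by simp
    then show ?thesis using isp_prefix by metis
  qed
  have unb: "\<exists>n. M \<le> length (concat (map (\<lambda>i. \<sigma> (d i)) [0..<n]))" for M
  proof -
    have "(q + 2 * M - q + 1) div 2 = M" by simp
    then have "concat (map (\<lambda>i. \<sigma> (d i)) [0..<q + 2 * M]) = u @ concat (map (\<sigma> \<circ> b) [0..<M])"
      using cat[of "q + 2 * M"] by simp
    then have "length (concat (map (\<lambda>i. \<sigma> (d i)) [0..<q + 2 * M])) \<ge> (\<Sum>j<M. length (\<sigma> (b j)))"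
      using length_concat_map[of "\<sigma> \<circ> b" M] by simp
    moreover have "(\<Sum>j<M. length (\<sigma> (b j))) \<ge> (\<Sum>j<M. 1)"
      by (rule sum_mono) (use bne in \<open>simp add: Suc_le_eq\<close>)
    ultimately have "M \<le> length (concat (map (\<lambda>i. \<sigma> (d i)) [0..<q + 2 * M]))" by simp
    then show ?thesis by blast
  qed
  have "val_concat (\<lambda>i. \<sigma> (d i)) = val_inf (app_inf u t)"
    by (rule val_concat_eq[OF pre unb])
  then show ?thesis using fx xC unfolding u_def by (metis image_eqI)
qed




lemma subst_fin_nil: "0 < k \<Longrightarrow> subst_fin k \<sigma> [] = []"
  unfolding subst_fin_def chunks_def by simp

lemma f_range: "f_sigma k \<sigma> x \<in> {0..1}"
  unfolding f_sigma_def using val_concat_01 by auto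

lemma funpow_range: "0 < n \<Longrightarrow> (f_sigma k \<sigma> ^^ n) x \<in> {0..1}"
proof -
  assume "0 < n"
  then obtain m where "n = Suc m" using gr0_implies_Suc by blast
  then show ?thesis using f_range[of k \<sigma> "(f_sigma k \<sigma> ^^ m) x"] by simp
qed

lemma Mstep:
  assumes k: "0 < k" and we: "length (w_eps k \<sigma>) = k" "\<sigma> (w_eps k \<sigma>) = []"
    and opt: "optimal k \<sigma>" and r: "length r mod k = 0"
  shows "C (subst_fin k \<sigma> r) \<subseteq> f_sigma k \<sigma> ` C r"
proof
  fix y assume "y \<in> C (subst_fin k \<sigma> r)"
  then obtain t where y: "y = val_inf (app_inf (subst_fin k \<sigma> r) t)" unfolding C_def by blast
  obtain b where b: "\<forall>i. length (b i) = k \<and> \<sigma> (b i) \<noteq> []"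
    "\<forall>n. map t [0..<(\<Sum>j<n. length (\<sigma> (b j)))] = concat (map (\<sigma> \<circ> b) [0..<n])"
    using opt unfolding optimal_def by blast
  have rl: "length r = (length r div k) * k" using r by (metis div_mult_mod_eq add.right_neutral)
  show "y \<in> f_sigma k \<sigma> ` C r" unfolding y
    by (rule main_step[OF k we refl rl]) (use b in auto)
qed

lemma w_eps_props:
  assumes "erasing_subst k \<sigma>"
  shows "length (w_eps k \<sigma>) = k \<and> \<sigma> (w_eps k \<sigma>) = []"
  using assms unfolding erasing_subst_def w_eps_def by (rule theI')

lemma f_full:
  assumes k: "0 < k" and we: "length (w_eps k \<sigma>) = k" "\<sigma> (w_eps k \<sigma>) = []"
    and opt: "optimal k \<sigma>"
  shows "f_sigma k \<sigma> ` {0..1} = {0..1}"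
proof
  show "f_sigma k \<sigma> ` {0..1} \<subseteq> {0..1}" using f_range by blast
  have "C (subst_fin k \<sigma> []) \<subseteq> f_sigma k \<sigma> ` C []" by (rule Mstep[OF k we opt]) simp
  then show "{0..1} \<subseteq> f_sigma k \<sigma> ` {0..1}" using C_nil subst_fin_nil[OF k] by simp
qed

lemma funpow_full:
  fixes f :: "real \<Rightarrow> real"
  assumes "f ` {0..1} = {0..1}" shows "(f ^^ n) ` {0..1} = {0..1}"
proof (induction n)
  case 0 then show ?case by simp
next
  case (Suc n)
  have "(f ^^ Suc n) ` {0..1} = f ` ((f ^^ n) ` {0..1})" by (simp add: image_comp)
  then show ?case using Suc assms by simp
qed

lemma part1:
  assumes k: "0 < k" and we: "length (w_eps k \<sigma>) = k" "\<sigma> (w_eps k \<sigma>) = []"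
    and opt: "optimal k \<sigma>" and se: "strongly_erasing k \<sigma>"
  shows "\<exists>h. (f_sigma k \<sigma> ^^ h) ` cyl w = {0..1}"
proof -
  let ?f = "f_sigma k \<sigma>"
  define P where "P (n::nat) (r::nat \<Rightarrow> bool list) \<longleftrightarrow> is_rounding k w (r 0) \<and>
      (\<forall>j. 1 \<le> j \<and> j \<le> n - 1 \<longrightarrow> is_rounding k (subst_fin k \<sigma> (r (j - 1))) (r j)) \<and>
      subst_fin k \<sigma> (r (n - 1)) = []" for n r
  have "\<exists>n \<ge> 1. \<exists>r. P n r" using spec[OF se[unfolded strongly_erasing_def], of w] unfolding P_def .
  then obtain n where n: "n \<ge> 1" and "\<exists>r. P n r" by blast
  then obtain r where "P n r" by blast
  then have r0: "is_rounding k w (r 0)"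
    and rj: "\<forall>j. 1 \<le> j \<and> j \<le> n - 1 \<longrightarrow> is_rounding k (subst_fin k \<sigma> (r (j - 1))) (r j)"
    and rn: "subst_fin k \<sigma> (r (n - 1)) = []" unfolding P_def by auto
  have rl: "length (r j) mod k = 0" if "j \<le> n - 1" for j
  proof (cases j)
    case 0 then show ?thesis using r0 unfolding is_rounding_def by simp
  next
    case (Suc i)
    then have "1 \<le> j \<and> j \<le> n - 1" using that by simp
    then have "is_rounding k (subst_fin k \<sigma> (r (j - 1))) (r j)" using rj by blast
    then show ?thesis unfolding is_rounding_def by blast
  qed
  have claim: "j \<le> n - 1 \<Longrightarrow> C (r j) \<subseteq> (?f ^^ j) ` C w" for j
  proof (induction j)
    case 0
    obtain v where "r 0 = w @ v" using r0 unfolding is_rounding_def by blast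
    then show ?case using C_mono by simp
  next
    case (Suc j)
    have "1 \<le> Suc j \<and> Suc j \<le> n - 1" using Suc.prems by simp
    then have "is_rounding k (subst_fin k \<sigma> (r (Suc j - 1))) (r (Suc j))" using rj by blast
    then have "is_rounding k (subst_fin k \<sigma> (r j)) (r (Suc j))" by simp
    then obtain v where "r (Suc j) = subst_fin k \<sigma> (r j) @ v" unfolding is_rounding_def by blast
    then have "C (r (Suc j)) \<subseteq> C (subst_fin k \<sigma> (r j))" using C_mono by simp
    also have "\<dots> \<subseteq> ?f ` C (r j)" by (rule Mstep[OF k we opt rl]) (use Suc.prems in simp)
    also have "\<dots> \<subseteq> ?f ` ((?f ^^ j) ` C w)" using Suc by (intro image_mono) simp
    also have "\<dots> = (?f ^^ Suc j) ` C w" by (simp add: image_comp)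
    finally show ?case .
  qed
  have "{0..1} = C (subst_fin k \<sigma> (r (n - 1)))" using rn C_nil by simp
  also have "\<dots> \<subseteq> ?f ` C (r (n - 1))" by (rule Mstep[OF k we opt rl]) simp
  also have "\<dots> \<subseteq> ?f ` ((?f ^^ (n - 1)) ` C w)" using claim by (intro image_mono) simp
  also have "\<dots> = (?f ^^ n) ` C w"
  proof -
    obtain m where m: "n = Suc m" using n by (metis Suc_diff_1 less_eq_Suc_le One_nat_def)
    have "?f ` ((?f ^^ m) ` C w) = (?f \<circ> (?f ^^ m)) ` C w" by (rule image_comp)
    then show ?thesis using m by simp
  qed
  finally have "{0..1} \<subseteq> (?f ^^ n) ` cyl w" using cyl_eq by simp
  moreover have "(?f ^^ n) ` cyl w \<subseteq> {0..1}" using funpow_range n by auto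
  ultimately show ?thesis by blast
qed




lemma open_cyl:
  assumes A: "openin (top_of_set {0..1::real}) A" and ne: "A \<noteq> {}"
  shows "\<exists>w. cyl w \<subseteq> A"
proof -
  obtain x where xA: "x \<in> A" using ne by blast
  have sub: "A \<subseteq> {0..1}" and nb: "\<forall>x\<in>A. \<exists>e>0. \<forall>x'\<in>{0..1}. dist x' x < e \<longrightarrow> x' \<in> A"
    using A unfolding openin_euclidean_subtopology_iff by auto
  obtain e where e: "e > 0" "\<forall>x'\<in>{0..1}. dist x' x < e \<longrightarrow> x' \<in> A" using nb xA by blast
  obtain t where t: "val_inf t = x" using expansion sub xA by blast
  obtain N where N: "(1/2::real) ^ N < e" using real_arch_pow_inv[of e "1/2"] e by auto
  define w where "w = map t [0..<N]"
  have "cyl w \<subseteq> A"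
  proof
    fix y assume "y \<in> cyl w"
    then obtain v where y: "y = val_inf (app_inf w v)" unfolding cyl_eq C_def by blast
    have y01: "y \<in> {0..1}" using C_sub \<open>y \<in> cyl w\<close> cyl_eq by blast
    have y2: "y = val_fin w + val_inf v / 2 ^ N" using y val_inf_app[of w v] unfolding w_def by simp
    have x2: "x = val_fin w + val_inf (\<lambda>m. t (m + N)) / 2 ^ N"
      using val_inf_split[of t N] t unfolding w_def by simp
    have "\<bar>val_inf v - val_inf (\<lambda>m. t (m + N))\<bar> \<le> 1"
      using val_inf_nonneg val_inf_le1 by (simp add: abs_le_iff) (meson add_increasing2 diff_le_eq order_trans val_inf_le1 val_inf_nonneg)
    then have "\<bar>val_inf v - val_inf (\<lambda>m. t (m + N))\<bar> / 2 ^ N \<le> 1 / 2 ^ N"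
      by (simp add: divide_right_mono)
    moreover have "dist y x = \<bar>val_inf v - val_inf (\<lambda>m. t (m + N))\<bar> / 2 ^ N"
      unfolding dist_real_def y2 x2 by (simp add: diff_divide_distrib[symmetric])
    moreover have "(1/2::real) ^ N = 1 / 2 ^ N" by (simp add: power_divide)
    ultimately have "dist y x < e" using N by simp
    then show "y \<in> A" using e y01 by blast
  qed
  then show ?thesis by blast
qed

theorem mainTheorem16:
  fixes k :: nat and \<sigma> :: "bool list \<Rightarrow> bool list"
  assumes "k \<ge> 2"
    and "erasing_subst k \<sigma>"
    and "strongly_erasing k \<sigma>"
    and "w_eps k \<sigma> \<noteq> replicate k True"
    and "optimal k \<sigma>"
  shows "(\<forall>w. \<exists>h. (f_sigma k \<sigma> ^^ h) ` cyl w = {0..1}) \<and>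
         (\<forall>A B. openin (top_of_set {0..1::real}) A \<and> openin (top_of_set {0..1}) B \<and>
                A \<noteq> {} \<and> B \<noteq> {} \<longrightarrow>
                (\<exists>N. \<forall>n\<ge>N. (f_sigma k \<sigma> ^^ n) ` A \<inter> B \<noteq> {}))"
proof -
  let ?f = "f_sigma k \<sigma>"
  have k: "0 < k" using assms(1) by simp
  have we: "length (w_eps k \<sigma>) = k" "\<sigma> (w_eps k \<sigma>) = []" using w_eps_props[OF assms(2)] by auto
  have P1: "\<forall>w. \<exists>h. (?f ^^ h) ` cyl w = {0..1}"
    using part1[OF k we assms(5) assms(3)] by blast
  have full: "(?f ^^ m) ` {0..1} = {0..1}" for m
    by (rule funpow_full[OF f_full[OF k we assms(5)]])
  have P2: "\<exists>N. \<forall>n\<ge>N. (?f ^^ n) ` A \<inter> B \<noteq> {}"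
    if A: "openin (top_of_set {0..1::real}) A" and B: "openin (top_of_set {0..1}) B"
      and ne: "A \<noteq> {}" "B \<noteq> {}" for A B
  proof -
    obtain w where w: "cyl w \<subseteq> A" using open_cyl[OF A ne(1)] by blast
    obtain h where h: "(?f ^^ h) ` cyl w = {0..1}" using P1 by blast
    have "B \<subseteq> {0..1}" using B unfolding openin_euclidean_subtopology_iff by blast
    have "(?f ^^ n) ` A \<inter> B \<noteq> {}" if n: "n \<ge> h" for n
    proof -
      have "?f ^^ n = (?f ^^ (n - h)) \<circ> (?f ^^ h)" using n funpow_add[of "n - h" h ?f] by simp
      then have "(?f ^^ n) ` cyl w = (?f ^^ (n - h)) ` ((?f ^^ h) ` cyl w)" by (simp add: image_comp)
      then have "(?f ^^ n) ` cyl w = {0..1}" using h full by simp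
      then have "{0..1} \<subseteq> (?f ^^ n) ` A" using w by (metis image_mono)
      then show ?thesis using \<open>B \<subseteq> {0..1}\<close> ne(2) by blast
    qed
    then show ?thesis by blast
  qed
  show ?thesis using P1 P2 by blast
qed


end
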